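(* Let $K>0$ and $0<t\le K/(2C)$. Then the function $F(x)=\Phi^K(-t\log x)$ is convex on $(0,\infty)$; with $F(0):=\Phi^K(+\infty)=\lim_{s\to\infty}\Phi^K(s)$ it is convex and continuous on $[0,\infty)$.
   Context: Let $g:\mathbb R\to\mathbb R$ be an odd bounded $C^3$ function such that $g(x)=x$ on $[-1,1]$, $0<g'(x)\le1$ on $\mathbb R$, and there is a constant $C>0$ with $0\le-g''(x)\le Cg'(x)$ for $x\in[-1,\infty)$. For $K>0$ put $\phi^K(x)=Kg(x/K)$ and $\Phi^K(x)=\int_0^x(\phi^K)'(s)^2\,ds$ (which is bounded and nondecreasing, hence has a finite limit at $+\infty$). *)

theory Defs
  imports "HOL-Analysis.Analysis"
begin

definition phiK :: "(real \<Rightarrow> real) \<Rightarrow> real \<Rightarrow> real \<Rightarrow> real" where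
  "phiK g K x = K * g (x / K)"

definition PhiK :: "(real \<Rightarrow> real) \<Rightarrow> real \<Rightarrow> real \<Rightarrow> real" where
  "PhiK g K x =
     (if 0 \<le> x then integral {0..x} (\<lambda>s. (deriv (phiK g K) s)\<^sup>2)
      else - integral {x..0} (\<lambda>s. (deriv (phiK g K) s)\<^sup>2))"

definition Fext :: "(real \<Rightarrow> real) \<Rightarrow> real \<Rightarrow> real \<Rightarrow> real \<Rightarrow> real" where
  "Fext g K t x = (if x = 0 then Lim at_top (PhiK g K) else PhiK g K (- t * ln x))"

end

theory Submission
  imports Defs
begin

lemma oriented_int_deriv:
  fixes h :: "real \<Rightarrow> real"
  assumes ch: "continuous_on UNIV h"
  shows "((\<lambda>x. if 0 \<le> x then integral {0..x} h else - integral {x..0} h) has_real_derivative h x) (at x)"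
proof -
  define a where "a = min x 0 - 1"
  define b where "b = max x 0 + 1"
  define G where "G y = integral {a..y} h - integral {a..0} h" for y
  have cab: "continuous_on {a..b} h" using ch continuous_on_subset by blast
  have xab: "x \<in> {a..b}" unfolding a_def b_def by auto
  have "(G has_real_derivative h x) (at x within {a..b})"
    unfolding G_def using integral_has_real_derivative[OF cab xab]
    by (auto intro!: derivative_eq_intros)
  then have "(G has_real_derivative h x) (at x within {a<..<b})"
    by (rule has_field_derivative_subset) auto
  moreover have "x \<in> {a<..<b}" unfolding a_def b_def by auto
  ultimately have dG: "(G has_real_derivative h x) (at x)"
    using at_within_open[of x "{a<..<b}"] by (metis open_greaterThanLessThan)
  show ?thesis
  proof (rule has_field_derivative_transform_within_open[OF dG, of "{a<..<b}"])
    show "open {a<..<b}" by simp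
    show "x \<in> {a<..<b}" unfolding a_def b_def by auto
    fix y assume y: "y \<in> {a<..<b}"
    have int: "\<And>c d. h integrable_on {c..d}"
      using ch continuous_on_subset integrable_continuous_interval by blast
    show "G y = (if 0 \<le> y then integral {0..y} h else - integral {y..0} h)"
    proof (cases "0 \<le> y")
      case True
      have "integral {a..0} h + integral {0..y} h = integral {a..y} h"
        by (rule Henstock_Kurzweil_Integration.integral_combine) (use True int a_def in auto)
      then show ?thesis using True unfolding G_def by auto
    next
      case False
      have "integral {a..y} h + integral {y..0} h = integral {a..0} h"
        by (rule Henstock_Kurzweil_Integration.integral_combine) (use False int y in auto)
      then show ?thesis using False unfolding G_def by auto
    qed
  qed
qed

lemma closure_ineq:
  fixes G :: "real \<Rightarrow> real"
  assumes cG: "continuous_on {0..} G" and pos: "\<And>y. y > 0 \<Longrightarrow> G y \<le> 0" and y: "y \<ge> 0"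
  shows "G y \<le> 0"
proof (cases "y = 0")
  case False then show ?thesis using pos y by auto
next
  case True
  have "(G \<longlongrightarrow> G 0) (at 0 within {0..})"
    using cG by (simp add: continuous_on_def)
  then have "(G \<longlongrightarrow> G 0) (at_right 0)"
    by (rule tendsto_within_subset) auto
  moreover have "\<forall>\<^sub>F x in at_right 0. G x \<le> 0"
    using eventually_at_right_less[of "0::real"] by eventually_elim (use pos in auto)
  ultimately have "G 0 \<le> 0"
    by (rule tendsto_upperbound) simp
  then show ?thesis using True by simp
qed

theorem mainTheorem13:
  fixes g g1 g2 g3 :: "real \<Rightarrow> real" and C K t :: real
  assumes odd: "\<And>x. g (- x) = - g x"
    and bdd: "bounded (range g)"
    and d1: "\<And>x. (g has_real_derivative g1 x) (at x)"
    and d2: "\<And>x. (g1 has_real_derivative g2 x) (at x)"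
    and d3: "\<And>x. (g2 has_real_derivative g3 x) (at x)"
    and c3: "continuous_on UNIV g3"
    and id: "\<And>x. x \<in> {-1..1} \<Longrightarrow> g x = x"
    and g1pos: "\<And>x. 0 < g1 x"
    and g1le: "\<And>x. g1 x \<le> 1"
    and Cpos: "C > 0"
    and g2a: "\<And>x. x \<ge> -1 \<Longrightarrow> 0 \<le> - g2 x"
    and g2b: "\<And>x. x \<ge> -1 \<Longrightarrow> - g2 x \<le> C * g1 x"
    and Kpos: "K > 0"
    and tpos: "0 < t"
    and tle: "t \<le> K / (2 * C)"
  shows "convex_on {0<..} (\<lambda>x. PhiK g K (- t * ln x)) \<and>
         convex_on {0..} (Fext g K t) \<and>
         continuous_on {0..} (Fext g K t)"
proof -
  define h where "h s = (g1 (s/K))^2" for s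
  define h' where "h' s = 2 * g1 (s/K) * (g2 (s/K) * (1/K))" for s
  define \<Phi> where "\<Phi> = PhiK g K"
  have dphi: "deriv (phiK g K) s = g1 (s/K)" for s
  proof -
    have "((\<lambda>x. K * g (x/K)) has_real_derivative K * (g1 (s/K) * (1/K))) (at s)"
      by (rule DERIV_cmult, rule DERIV_chain2[OF d1]) (use Kpos in \<open>auto intro!: derivative_eq_intros\<close>)
    then have "(phiK g K has_real_derivative g1 (s/K)) (at s)"
      using Kpos unfolding phiK_def[abs_def] by simp
    then show ?thesis by (rule DERIV_imp_deriv)
  qed
  have dg1K: "((\<lambda>s. g1 (s/K)) has_real_derivative g2 (x/K) * (1/K)) (at x)" for x
    by (rule DERIV_chain2[OF d2]) (use Kpos in \<open>auto intro!: derivative_eq_intros\<close>)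
  have dh: "(h has_real_derivative h' x) (at x)" for x
  proof -
    have "((\<lambda>s. g1 (s/K) * g1 (s/K)) has_real_derivative
        g1 (x/K) * (g2 (x/K) * (1/K)) + (g2 (x/K) * (1/K)) * g1 (x/K)) (at x)"
      by (rule DERIV_mult'[OF dg1K dg1K])
    then show ?thesis unfolding h_def h'_def power2_eq_square by (simp add: algebra_simps)
  qed
  have ch: "continuous_on UNIV h"
    using dh by (meson DERIV_isCont continuous_at_imp_continuous_on)
  have PhiK_eq: "\<Phi> = (\<lambda>x. if 0 \<le> x then integral {0..x} h else - integral {x..0} h)"
    unfolding \<Phi>_def PhiK_def[abs_def] h_def dphi by simp
  have dPhi: "(\<Phi> has_real_derivative h x) (at x)" for x
    unfolding PhiK_eq by (rule oriented_int_deriv[OF ch])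
  have hnn: "h x \<ge> 0" for x unfolding h_def by simp
  have g1even: "g1 (-x) = g1 x" for x
  proof -
    have A: "((\<lambda>x. g (-x)) has_real_derivative g1 (-x) * (-1)) (at x)"
      by (rule DERIV_chain2[OF d1]) (use Kpos in \<open>auto intro!: derivative_eq_intros\<close>)
    have B: "((\<lambda>x. g (-x)) has_real_derivative - g1 x) (at x)"
      using DERIV_minus[OF d1[of x]] by (simp add: odd)
    show ?thesis using DERIV_unique[OF A B] by simp
  qed
  have g2odd: "g2 (-x) = - g2 x" for x
  proof -
    have A: "((\<lambda>x. g1 (-x)) has_real_derivative g2 (-x) * (-1)) (at x)"
      by (rule DERIV_chain2[OF d2]) (use Kpos in \<open>auto intro!: derivative_eq_intros\<close>)
    have B: "((\<lambda>x. g1 (-x)) has_real_derivative g2 x) (at x)"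
      using d2[of x] by (simp add: g1even)
    show ?thesis using DERIV_unique[OF A B] by simp
  qed
  have key: "h u + t * h' u \<ge> 0" for u
  proof -
    define y where "y = u / K"
    have eq: "h u + t * h' u = g1 y * (g1 y + (2*t/K) * g2 y)"
      unfolding h_def h'_def y_def by (simp add: power2_eq_square algebra_simps)
    have "g1 y + (2*t/K) * g2 y \<ge> 0"
    proof (cases "y \<ge> -1")
      case True
      have c1: "2*t/K \<le> 1/C" using tle Kpos Cpos by (simp add: field_simps)
      have c2: "2*t/K \<ge> 0" using tpos Kpos by simp
      have "(2*t/K) * (- g2 y) \<le> (1/C) * (C * g1 y)"
        using mult_mono[OF c1 g2b[OF True] _ g2a[OF True]] Cpos g1pos[of y] by simp
      then show ?thesis using Cpos by (simp add: algebra_simps)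
    next
      case False
      have "0 \<le> - g2 (-y)" using False by (intro g2a) simp
      then have "g2 y \<ge> 0" using g2odd[of y] by simp
      then show ?thesis using g1pos[of y] tpos Kpos by (simp add: add_pos_nonneg)
    qed
    then show ?thesis unfolding eq using g1pos[of y] by simp
  qed
  define F0 where "F0 x = \<Phi> (- t * ln x)" for x
  have dF0: "(F0 has_real_derivative (- t / x * h (- t * ln x))) (at x)" if "x > 0" for x
  proof -
    have "((\<lambda>x. \<Phi> (- t * ln x)) has_real_derivative h (- t * ln x) * (- t * (1/x))) (at x)"
      by (rule DERIV_chain2[OF dPhi]) (use that in \<open>auto intro!: derivative_eq_intros\<close>)
    then show ?thesis unfolding F0_def by (simp add: field_simps)
  qed
  have dF1: "((\<lambda>x. - t / x * h (- t * ln x)) has_real_derivative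
      t / x^2 * (h (- t * ln x) + t * h' (- t * ln x))) (at x)" if "x > 0" for x
  proof -
    have A: "((\<lambda>x. h (- t * ln x)) has_real_derivative h' (- t * ln x) * (- t * (1/x))) (at x)"
      by (rule DERIV_chain2[OF dh]) (use that in \<open>auto intro!: derivative_eq_intros\<close>)
    have B: "((\<lambda>x. - t / x) has_real_derivative t / x^2) (at x)"
      using that by (auto intro!: derivative_eq_intros simp: power2_eq_square)
    have "((\<lambda>x. - t / x * h (- t * ln x)) has_real_derivative
       - t / x * (h' (- t * ln x) * (- t * (1/x))) + t / x^2 * h (- t * ln x)) (at x)"
      by (rule DERIV_mult'[OF B A])
    then show ?thesis using that by (simp add: field_simps power2_eq_square)
  qed
  have conv1: "convex_on {0<..} F0"
  proof (rule f''_ge0_imp_convex)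
    show "convex {0::real<..}" by simp
    show "\<And>x. x \<in> {0<..} \<Longrightarrow> DERIV F0 x :> (- t / x * h (- t * ln x))" using dF0 by simp
    show "\<And>x. x \<in> {0<..} \<Longrightarrow> DERIV (\<lambda>x. - t / x * h (- t * ln x)) x :>
        (t / x^2 * (h (- t * ln x) + t * h' (- t * ln x)))" using dF1 by simp
    show "\<And>x. x \<in> {0<..} \<Longrightarrow> 0 \<le> t / x^2 * (h (- t * ln x) + t * h' (- t * ln x))"
      using key tpos by simp
  qed
  have Phimono: "\<Phi> x \<le> \<Phi> y" if "x \<le> y" for x y
    by (rule DERIV_nonneg_imp_nondecreasing[OF that]) (use dPhi hnn in blast)
  have Phi0: "\<Phi> 0 = 0" unfolding \<Phi>_def PhiK_def by simp
  obtain B where B: "\<And>x. \<bar>g x\<bar> \<le> B" using bdd unfolding bounded_iff by auto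
  have g0: "g 0 = 0" using id[of 0] by simp
  have Bnn: "B \<ge> 0" using B[of 0] by simp
  have Phibd: "\<Phi> x \<le> K * B" for x
  proof (cases "x \<ge> 0")
    case True
    have "\<Phi> 0 - K * g (0/K) \<ge> \<Phi> x - K * g (x/K)"
    proof (rule DERIV_nonpos_imp_nonincreasing[OF True])
      fix s
      have d: "((\<lambda>s. \<Phi> s - K * g (s/K)) has_real_derivative h s - K * (g1 (s/K) * (1/K))) (at s)"
        by (intro DERIV_diff dPhi DERIV_cmult DERIV_chain2[OF d1]) (use Kpos in \<open>auto intro!: derivative_eq_intros\<close>)
      have "h s \<le> g1 (s/K)" unfolding h_def power2_eq_square
        using mult_left_le[OF g1le less_imp_le[OF g1pos]] by simp
      then show "\<exists>y. ((\<lambda>s. \<Phi> s - K * g (s/K)) has_real_derivative y) (at s) \<and> y \<le> 0"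
        using d Kpos by auto
    qed
    then have "\<Phi> x \<le> K * g (x/K)" using Phi0 g0 by simp
    also have "\<dots> \<le> K * B" using B[of "x/K"] Kpos by (simp add: abs_le_iff)
    finally show ?thesis .
  next
    case False
    then have "\<Phi> x \<le> \<Phi> 0" by (intro Phimono) simp
    then show ?thesis using Phi0 Kpos Bnn mult_nonneg_nonneg[of K B] by linarith
  qed
  define L where "L = Sup (range \<Phi>)"
  have bddr: "bdd_above (range \<Phi>)" using Phibd by (intro bdd_aboveI[of _ "K*B"]) auto
  have tendL: "(\<Phi> \<longlongrightarrow> L) at_top"
  proof (rule order_tendstoI)
    fix a assume "a < L"
    then obtain x0 where "a < \<Phi> x0" unfolding L_def using less_cSup_iff[of "range \<Phi>" a] bddr by auto
    then have ax: "a < \<Phi> x" if "x \<ge> x0" for x using Phimono[OF that] by linarith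
    show "\<forall>\<^sub>F x in at_top. a < \<Phi> x"
      by (rule eventually_mono[OF eventually_ge_at_top[of x0] ax])
  next
    fix a assume "L < a"
    then show "\<forall>\<^sub>F x in at_top. \<Phi> x < a"
    proof (intro always_eventually allI)
      fix x have "\<Phi> x \<le> L" unfolding L_def by (rule cSup_upper[OF _ bddr]) simp
      then show "\<Phi> x < a" using \<open>L < a\<close> by linarith
    qed
  qed
  have LimL: "Lim at_top \<Phi> = L" using tendL by (intro tendsto_Lim) simp_all
  have Fext0: "Fext g K t 0 = L" unfolding Fext_def using LimL \<Phi>_def by simp
  have Fextp: "Fext g K t x = F0 x" if "x > 0" for x
    using that unfolding Fext_def F0_def \<Phi>_def by simp
  have cont: "continuous_on {0..} (Fext g K t)"
    unfolding continuous_on_eq_continuous_within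
  proof
    fix x :: real assume x: "x \<in> {0..}"
    show "continuous (at x within {0..}) (Fext g K t)"
    proof (cases "x = 0")
      case False
      then have xp: "x > 0" using x by simp
      have "(Fext g K t has_real_derivative (- t / x * h (- t * ln x))) (at x)"
        by (rule has_field_derivative_transform_within_open[OF dF0[OF xp], of "{0<..}"])
           (use xp Fextp in auto)
      then have "isCont (Fext g K t) x" by (rule DERIV_isCont)
      then show ?thesis by (rule continuous_at_imp_continuous_at_within)
    next
      case True
      have lim: "filterlim (\<lambda>y. - t * ln y) at_top (at_right 0)"
      proof -
        have "filterlim (\<lambda>y. t * ln y) at_bot (at_right 0)"
          by (rule filterlim_tendsto_pos_mult_at_bot[OF tendsto_const tpos ln_at_0])
        then show ?thesis using filterlim_uminus_at_top[of "\<lambda>y. - t * ln y"] by simp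
      qed
      have "(F0 \<longlongrightarrow> L) (at_right 0)"
        unfolding F0_def by (rule filterlim_compose[OF tendL lim])
      moreover have "at (0::real) within {0..} = at_right 0"
        by (rule at_within_nhd[of _ UNIV]) auto
      ultimately have "(F0 \<longlongrightarrow> L) (at 0 within {0..})" by simp
      then have "(Fext g K t \<longlongrightarrow> L) (at 0 within {0..})"
      proof (rule Lim_transform_eventually)
        show "\<forall>\<^sub>F y in at 0 within {0..}. F0 y = Fext g K t y"
          unfolding eventually_at_filter by (auto intro!: always_eventually simp: Fextp)
      qed
      then show ?thesis using True Fext0 by (simp add: continuous_within)
    qed
  qed
  have conv1': "convex_on {0<..} (Fext g K t)"
  proof (rule convex_onI)
    show "convex {0::real<..}" by simp
    fix u x y :: real assume u: "u > 0" "u < 1" and xy: "x \<in> {0<..}" "y \<in> {0<..}"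
    have p: "(1-u)*x + u*y > 0" using u xy by (intro add_pos_pos mult_pos_pos) auto
    show "Fext g K t ((1 - u) *\<^sub>R x + u *\<^sub>R y) \<le> (1 - u) * Fext g K t x + u * Fext g K t y"
      using convex_onD[OF conv1, of u x y] u xy p by (simp add: Fextp)
  qed
  have conv2: "convex_on {0..} (Fext g K t)"
  proof (rule convex_onI)
    show "convex {0::real..}" by simp
    fix u x y :: real assume u: "u > 0" "u < 1" and xy: "x \<in> {0..}" "y \<in> {0..}"
    let ?F = "Fext g K t"
    have cmp: "continuous_on {0..} (\<lambda>z. ?F (a * z + b))" if "a \<ge> 0" "b \<ge> 0" for a b
      by (rule continuous_on_compose2[OF cont]) (use that in \<open>auto intro!: continuous_intros\<close>)
    have step1: "?F ((1 - u) *\<^sub>R x + u *\<^sub>R y) \<le> (1 - u) * ?F x + u * ?F y"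
      if xp: "x > 0" and yp: "y \<ge> 0" for x y
    proof -
      define G where "G z = ?F ((1 - u) * x + u * z) - (1 - u) * ?F x - u * ?F z" for z
      have cG: "continuous_on {0..} G" unfolding G_def
        using cmp[of u "(1-u)*x"] u that
        by (intro continuous_intros cont) (auto simp: add.commute)
      have Gn: "G z \<le> 0" if "z > 0" for z
        using convex_onD[OF conv1', of u x z] u \<open>x > 0\<close> that unfolding G_def by simp
      have "G y \<le> 0" by (rule closure_ineq[OF cG Gn yp])
      then show ?thesis unfolding G_def by simp
    qed
    define G where "G z = ?F ((1 - u) * z + u * y) - (1 - u) * ?F z - u * ?F y" for z
    have cG: "continuous_on {0..} G" unfolding G_def
      using cmp[of "1-u" "u*y"] u xy
      by (intro continuous_intros cont) auto
    have Gn: "G z \<le> 0" if "z > 0" for z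
      using step1[of z y] that xy unfolding G_def by simp
    have "G x \<le> 0" by (rule closure_ineq[OF cG Gn]) (use xy in auto)
    then show "?F ((1 - u) *\<^sub>R x + u *\<^sub>R y) \<le> (1 - u) * ?F x + u * ?F y"
      unfolding G_def by simp
  qed
  show ?thesis using conv1 conv2 cont unfolding F0_def \<Phi>_def by simp
qed

end
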